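(* Let $3\leq m\leq n$, $\ell=m-1$, $p=(m-1)n$, and $Y=(Y_1;\ldots;Y_\ell)\in\mathbb{R}^{n\times n\times\ell}$. Then $\operatorname{rank} X(Y)=p$ if and only if $Y\in\mathfrak{M}$.
   Context: An $m_1\times m_2\times m_3$ tensor $(x_{ijk})$ is written $(X_1;\ldots;X_{m_3})$ with $X_t=(x_{ijt})$ an $m_1\times m_2$ matrix; rank is real tensor rank (minimal number of real rank-one tensors $\mathbf{x}\otimes\mathbf{y}\otimes\mathbf{z}$ summing to the tensor). $E_n$ is the $n\times n$ identity. For $Y=(Y_1;\ldots;Y_\ell)\in\mathbb{R}^{n\times n\times\ell}$, $X(Y)=(X_1;\ldots;X_m)$ is the $n\times p\times m$ tensor whose slices are: for $1\leq k\leq\ell$, $X_k$ is the $n\times p$ block row having $E_n$ in the $k$-th $n\times n$ block and zero blocks elsewhere, and $X_m=(Y_1,Y_2,\ldots,Y_\ell)$; i.e. stacking $X_1,\ldots,X_m$ vertically gives $\begin{pmatrix}E_p\\ Y_1\ \cdots\ Y_\ell\end{pmatrix}$. $\mathfrak{M}$ is the set of $Y\in\mathbb{R}^{n\times n\times\ell}$ for which there exist a real $m\times p$ matrix $(x_{ij})$ and a real $n\times p$ matrix $A=(\mathbf{a}_1,\ldots,\mathbf{a}_p)$ such that $(x_{1j}Y_1+\cdots+x_{\ell j}Y_\ell-x_{mj}E_n)\mathbf{a}_j=\mathbf{0}$ for $1\leq j\leq p$ and the $p\times p$ matrix $B=\begin{pmatrix}AD_1\\ \vdots\\ AD_\ell\end{pmatrix}$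 is nonsingular, where $D_k=\operatorname{diag}(x_{k1},\ldots,x_{kp})$. *)

theory Defs
  imports "Jordan_Normal_Form.Determinant"
begin

text \<open>Tensors are represented as functions \<open>nat \<Rightarrow> nat \<Rightarrow> nat \<Rightarrow> real\<close>
  (0-indexed), only the entries inside the stated dimensions matter.\<close>

definition tensor_rank_le :: "nat \<Rightarrow> nat \<Rightarrow> nat \<Rightarrow> (nat \<Rightarrow> nat \<Rightarrow> nat \<Rightarrow> real) \<Rightarrow> nat \<Rightarrow> bool" where
  "tensor_rank_le d1 d2 d3 T r \<longleftrightarrow>
     (\<exists>(x::nat \<Rightarrow> nat \<Rightarrow> real) (y::nat \<Rightarrow> nat \<Rightarrow> real) (z::nat \<Rightarrow> nat \<Rightarrow> real).
        \<forall>i<d1. \<forall>j<d2. \<forall>k<d3. T i j k = (\<Sum>s<r. x s i * y s j * z s k))"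

definition tensor_rank :: "nat \<Rightarrow> nat \<Rightarrow> nat \<Rightarrow> (nat \<Rightarrow> nat \<Rightarrow> nat \<Rightarrow> real) \<Rightarrow> nat" where
  "tensor_rank d1 d2 d3 T = (LEAST r. tensor_rank_le d1 d2 d3 T r)"

text \<open>\<open>Y t i j\<close> is entry \<open>(i,j)\<close> of slice \<open>Y_(t+1)\<close>, \<open>t < l\<close>.
  \<open>XY n l Y\<close> is the \<open>n \<times> (l n) \<times> (l+1)\<close> tensor \<open>X(Y)\<close>: slice \<open>k < l\<close> has \<open>E_n\<close>
  in the k-th block, slice \<open>l\<close> is \<open>(Y_1,\<dots>,Y_l)\<close>.\<close>
definition XY :: "nat \<Rightarrow> nat \<Rightarrow> (nat \<Rightarrow> nat \<Rightarrow> nat \<Rightarrow> real) \<Rightarrow> (nat \<Rightarrow> nat \<Rightarrow> nat \<Rightarrow> real)" where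
  "XY n l Y = (\<lambda>i j k. if k < l then (if j = k * n + i then 1 else 0)
                        else Y (j div n) i (j mod n))"

text \<open>The set \<open>frak M\<close> (with \<open>m = l+1\<close>, \<open>p = l n\<close>), 0-indexed: row \<open>l\<close> of x is the paper's row m.\<close>
definition setM :: "nat \<Rightarrow> nat \<Rightarrow> (nat \<Rightarrow> nat \<Rightarrow> nat \<Rightarrow> real) set" where
  "setM n l = {Y. \<exists>(x::nat \<Rightarrow> nat \<Rightarrow> real) (A::nat \<Rightarrow> nat \<Rightarrow> real).
      (\<forall>j<l*n. \<forall>i<n.
          (\<Sum>r<n. ((\<Sum>k<l. x k j * Y k i r) - x l j * (if i = r then 1 else 0)) * A r j) = 0)
    \<and> det (mat (l*n) (l*n) (\<lambda>(r, j). A (r mod n) j * x (r div n) j)) \<noteq> 0}"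

end

theory Submission
  imports Defs
begin

lemma reidx: fixes f :: "nat \<Rightarrow> real" shows "(\<Sum>j<l*n. f j) = (\<Sum>k<l. \<Sum>r<n. f (k*n+r))"
proof -
  have "(\<Sum>j<l*n. f j) = (\<Sum>k<l. \<Sum>j\<in>{k*n..<k*n+n}. f j)"
    using sum.nat_group[of f n l] by simp
  also have "\<dots> = (\<Sum>k<l. \<Sum>r<n. f (k*n+r))"
  proof (rule sum.cong[OF refl])
    fix k
    show "(\<Sum>j\<in>{k*n..<k*n+n}. f j) = (\<Sum>r<n. f (k*n+r))"
      using sum.shift_bounds_nat_ivl[of f 0 "k*n" n] by (simp add: atLeast0LessThan add.commute)
  qed
  finally show ?thesis .
qed

lemma mult_entry:
  fixes f g :: "nat \<times> nat \<Rightarrow> real"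
  assumes "i < p" "j < p"
  shows "(mat p p f * mat p p g) $$ (i,j) = (\<Sum>s<p. f (i,s) * g (s,j))"
  using assms by (simp add: scalar_prod_def atLeast0LessThan)

lemma rank_exists: "\<exists>r. tensor_rank_le d1 d2 d3 T r"
proof -
  define x where "x = (\<lambda>s i. T i (s mod d2) (s div d2))"
  define y where "y = (\<lambda>s j. if j = s mod d2 then 1 else (0::real))"
  define z where "z = (\<lambda>s k. if k = s div d2 then 1 else (0::real))"
  have "\<forall>i<d1. \<forall>j<d2. \<forall>k<d3. T i j k = (\<Sum>s<d3*d2. x s i * y s j * z s k)"
  proof (intro allI impI)
    fix i j k assume ij: "i < d1" "j < d2" "k < d3"
    have "(\<Sum>s<d3*d2. x s i * y s j * z s k)
        = (\<Sum>k'<d3. \<Sum>r<d2. x (k'*d2+r) i * y (k'*d2+r) j * z (k'*d2+r) k)"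
      by (rule reidx)
    also have "\<dots> = (\<Sum>k'<d3. \<Sum>r<d2. if k' = k then (if r = j then T i j k else 0) else 0)"
      by (intro sum.cong refl) (auto simp: x_def y_def z_def)
    also have "\<dots> = (\<Sum>k'<d3. if k' = k then T i j k else 0)"
      using ij by (intro sum.cong refl) simp
    also have "\<dots> = T i j k" using ij by simp
    finally show "T i j k = (\<Sum>s<d3*d2. x s i * y s j * z s k)" by simp
  qed
  then show ?thesis unfolding tensor_rank_le_def by blast
qed

lemma identity_part:
  assumes "\<forall>i<n. \<forall>j<l*n. \<forall>k<Suc l. XY n l Y i j k = (\<Sum>s<r. x s i * y s j * z s k)"
    and "a < l*n" "j < l*n"
  shows "(\<Sum>s<r. x s (a mod n) * z s (a div n) * y s j) = (if a = j then 1 else 0)"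
proof -
  have n: "0 < n" using assms(2) by (cases n) auto
  have ad: "a div n < l" using assms(2) by (simp add: less_mult_imp_div_less)
  have am: "a mod n < n" using n by simp
  have "XY n l Y (a mod n) j (a div n) = (\<Sum>s<r. x s (a mod n) * y s j * z s (a div n))"
    using assms(1) am assms(3) ad by auto
  moreover have "XY n l Y (a mod n) j (a div n) = (if a = j then 1 else 0)"
    using ad by (auto simp: XY_def mult.commute)
  ultimately show ?thesis by (simp add: mult_ac)
qed

lemma lower_bound:
  assumes "tensor_rank_le n (l*n) (Suc l) (XY n l Y) r"
  shows "l*n \<le> r"
proof (rule ccontr)
  assume "\<not> l*n \<le> r"
  hence rp: "r < l*n" by simp
  define p where "p = l*n"
  obtain x y z where E0: "\<forall>i<n. \<forall>j<l*n. \<forall>k<Suc l. XY n l Y i j k = (\<Sum>s<r. x s i * y s j * z s k)"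
    using assms unfolding tensor_rank_le_def by blast
  note E = identity_part[OF E0]
  define U where "U = mat p p (\<lambda>(a,s). if s < r then x s (a mod n) * z s (a div n) else 0)"
  define V where "V = mat p p (\<lambda>(s,j). if s < r then y s j else 0)"
  have UV: "U * V = 1\<^sub>m p"
  proof (rule eq_matI)
    fix a j assume aj: "a < dim_row (1\<^sub>m p)" "j < dim_col (1\<^sub>m p)"
    hence ap: "a < p" "j < p" by auto
    have "(U*V) $$ (a,j) = (\<Sum>s<p. (if s < r then x s (a mod n) * z s (a div n) else 0) * (if s < r then y s j else 0))"
      unfolding U_def V_def by (subst mult_entry[OF ap]) simp
    also have "\<dots> = (\<Sum>s<r. x s (a mod n) * z s (a div n) * y s j)"
    proof -
      have "(\<Sum>s<p. (if s < r then x s (a mod n) * z s (a div n) else 0) * (if s < r then y s j else 0))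
        = (\<Sum>s<r. (if s < r then x s (a mod n) * z s (a div n) else 0) * (if s < r then y s j else 0))"
        by (rule sum.mono_neutral_right) (use rp p_def in auto)
      thus ?thesis by simp
    qed
    also have "\<dots> = (if a = j then 1 else 0)" using E ap p_def by simp
    finally show "(U*V) $$ (a,j) = 1\<^sub>m p $$ (a,j)" using ap by simp
  qed (auto simp: U_def V_def)
  have Uc: "U \<in> carrier_mat p p" "V \<in> carrier_mat p p" unfolding U_def V_def by auto
  have "det V = 0"
  proof -
    have pl: "p - 1 < p" using rp p_def by simp
    have "V = mat\<^sub>r p p (\<lambda>i. if i = p - 1 then 0\<^sub>v p else row V i)"
      by (rule eq_matI) (use rp p_def in \<open>auto simp: V_def\<close>)
    also have "det \<dots> = 0"
      by (rule det_row_0[OF pl]) (auto simp: V_def)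
    finally show ?thesis .
  qed
  hence "det (U * V) = 0" using det_mult[OF Uc] by simp
  thus False using UV by simp
qed

lemma fwd:
  assumes "tensor_rank_le n (l*n) (Suc l) (XY n l Y) (l*n)"
  shows "Y \<in> setM n l"
proof -
  define p where "p = l*n"
  obtain x y z where E0: "\<forall>i<n. \<forall>j<l*n. \<forall>k<Suc l. XY n l Y i j k = (\<Sum>s<l*n. x s i * y s j * z s k)"
    using assms unfolding tensor_rank_le_def by blast
  note E = identity_part[OF E0]
  define U where "U = mat p p (\<lambda>(r,j). x j (r mod n) * z j (r div n))"
  define V where "V = mat p p (\<lambda>(s,j). y s j)"
  have UV: "U * V = 1\<^sub>m p"
  proof (rule eq_matI)
    fix a j assume aj: "a < dim_row (1\<^sub>m p)" "j < dim_col (1\<^sub>m p)"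
    hence ap: "a < p" "j < p" by auto
    have "(U*V) $$ (a,j) = (\<Sum>s<p. x s (a mod n) * z s (a div n) * y s j)"
      unfolding U_def V_def by (subst mult_entry[OF ap]) simp
    also have "\<dots> = (if a = j then 1 else 0)" using E ap p_def by simp
    finally show "(U*V) $$ (a,j) = 1\<^sub>m p $$ (a,j)" using ap by simp
  qed (auto simp: U_def V_def)
  have Uc: "U \<in> carrier_mat p p" "V \<in> carrier_mat p p" unfolding U_def V_def by auto
  have VU: "V * U = 1\<^sub>m p" by (rule mat_mult_left_right_inverse[OF Uc UV])
  have detU: "det U \<noteq> 0" using det_mult[OF Uc] UV by auto
  have VUe: "(\<Sum>j'<p. y s j' * (x j (j' mod n) * z j (j' div n))) = (if s = j then 1 else 0)"
    if "s < p" "j < p" for s j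
  proof -
    have "(V*U) $$ (s,j) = (\<Sum>j'<p. y s j' * (x j (j' mod n) * z j (j' div n)))"
      unfolding U_def V_def by (subst mult_entry[OF that]) simp
    thus ?thesis using VU that by simp
  qed
  have ker: "(\<Sum>r<n. ((\<Sum>k<l. z j k * Y k i r) - z j l * (if i = r then 1 else 0)) * x j r) = 0"
    if j: "j < l*n" and i: "i < n" for j i
  proof -
    have F: "Y (j' div n) i (j' mod n) = (\<Sum>s<p. x s i * y s j' * z s l)" if "j' < p" for j'
    proof -
      have "XY n l Y i j' l = (\<Sum>s<l*n. x s i * y s j' * z s l)" using E0 i that p_def by blast
      thus ?thesis using p_def by (simp add: XY_def)
    qed
    define S where "S = (\<Sum>j'<p. Y (j' div n) i (j' mod n) * (x j (j' mod n) * z j (j' div n)))"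
    have Sa: "S = (\<Sum>k<l. \<Sum>r<n. Y k i r * (x j r * z j k))"
      unfolding S_def p_def by (subst reidx) (intro sum.cong refl, simp)
    have "S = (\<Sum>j'<p. (\<Sum>s<p. x s i * y s j' * z s l) * (x j (j' mod n) * z j (j' div n)))"
      unfolding S_def by (intro sum.cong refl) (simp add: F)
    also have "\<dots> = (\<Sum>j'<p. \<Sum>s<p. x s i * z s l * (y s j' * (x j (j' mod n) * z j (j' div n))))"
      by (rule sum.cong[OF refl], subst sum_distrib_right, rule sum.cong[OF refl], simp add: mult_ac)
    also have "\<dots> = (\<Sum>s<p. \<Sum>j'<p. x s i * z s l * (y s j' * (x j (j' mod n) * z j (j' div n))))"
      by (rule sum.swap)
    also have "\<dots> = (\<Sum>s<p. x s i * z s l * (\<Sum>j'<p. y s j' * (x j (j' mod n) * z j (j' div n))))"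
      by (simp add: sum_distrib_left)
    also have "\<dots> = (\<Sum>s<p. x s i * z s l * (if s = j then 1 else 0))"
      using j unfolding p_def[symmetric] by (intro sum.cong refl) (simp add: VUe)
    also have "\<dots> = x j i * z j l" using j p_def by (simp add: if_distrib cong: if_cong)
    finally have Sb: "S = x j i * z j l" .
    have "(\<Sum>r<n. ((\<Sum>k<l. z j k * Y k i r) - z j l * (if i = r then 1 else 0)) * x j r)
        = (\<Sum>r<n. \<Sum>k<l. Y k i r * (x j r * z j k)) - (\<Sum>r<n. z j l * (if i = r then 1 else 0) * x j r)"
      unfolding sum_subtractf[symmetric]
      by (intro sum.cong refl) (simp add: left_diff_distrib right_diff_distrib sum_distrib_left sum_distrib_right mult_ac)
    also have "(\<Sum>r<n. z j l * (if i = r then 1 else 0) * x j r) = (\<Sum>r<n. if i = r then x j i * z j l else 0)"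
      by (intro sum.cong refl) auto
    also have "\<dots> = x j i * z j l" using i by simp
    also have "(\<Sum>r<n. \<Sum>k<l. Y k i r * (x j r * z j k)) = S"
      unfolding Sa by (rule sum.swap)
    finally show ?thesis using Sb by simp
  qed
  show ?thesis unfolding setM_def
    apply (rule CollectI)
    apply (rule exI[of _ "\<lambda>k j. z j k"], rule exI[of _ "\<lambda>r j. x j r"])
    using ker detU by (simp add: U_def p_def)
qed

lemma mult_entry2:
  fixes f :: "nat \<times> nat \<Rightarrow> real"
  assumes "Bi \<in> carrier_mat p p" "i < p" "j < p"
  shows "(mat p p f * Bi) $$ (i,j) = (\<Sum>s<p. f (i,s) * Bi $$ (s,j))"
  using assms by (simp add: scalar_prod_def atLeast0LessThan)

lemma bwd:
  assumes "Y \<in> setM n l"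
  shows "tensor_rank_le n (l*n) (Suc l) (XY n l Y) (l*n)"
proof -
  define p where "p = l*n"
  obtain xM A where ker: "\<forall>j<l*n. \<forall>i<n.
          (\<Sum>r<n. ((\<Sum>k<l. xM k j * Y k i r) - xM l j * (if i = r then 1 else 0)) * A r j) = 0"
    and dB: "det (mat (l*n) (l*n) (\<lambda>(r, j). A (r mod n) j * xM (r div n) j)) \<noteq> 0"
    using assms unfolding setM_def by blast
  define B where "B = mat p p (\<lambda>(r, j). A (r mod n) j * xM (r div n) j)"
  have Bc: "B \<in> carrier_mat p p" unfolding B_def by simp
  have "B \<in> Units (ring_mat TYPE(real) p ())"
    by (rule det_non_zero_imp_unit[OF Bc]) (use dB in \<open>simp add: B_def p_def\<close>)
  then obtain Bi where Bic: "Bi \<in> carrier_mat p p" and BBi: "B * Bi = 1\<^sub>m p"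
    unfolding Units_def ring_mat_simps by auto
  have BBie: "(\<Sum>s<p. A (a mod n) s * xM (a div n) s * Bi $$ (s,j)) = (if a = j then 1 else 0)"
    if "a < p" "j < p" for a j
  proof -
    have "(B * Bi) $$ (a,j) = (\<Sum>s<p. A (a mod n) s * xM (a div n) s * Bi $$ (s,j))"
      unfolding B_def by (subst mult_entry2[OF _ that]) (use Bic in \<open>auto simp: B_def\<close>)
    thus ?thesis using BBi that by simp
  qed
  have main: "XY n l Y i j k = (\<Sum>s<l*n. A i s * Bi $$ (s,j) * xM k s)"
    if i: "i < n" and j: "j < l*n" and k: "k < Suc l" for i j k
  proof (cases "k < l")
    case True
    have a: "k*n + i < p"
    proof -
      have "k*n + i < k*n + n" using i by simp
      also have "\<dots> = Suc k * n" by simp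
      also have "\<dots> \<le> l * n" using True by (intro mult_right_mono) auto
      finally show ?thesis unfolding p_def .
    qed
    have "(\<Sum>s<l*n. A i s * Bi $$ (s,j) * xM k s) = (\<Sum>s<p. A ((k*n+i) mod n) s * xM ((k*n+i) div n) s * Bi $$ (s,j))"
      unfolding p_def using i by (intro sum.cong refl) (simp add: mult_ac)
    also have "\<dots> = (if k*n+i = j then 1 else 0)" by (rule BBie[OF a]) (use j p_def in simp)
    finally show ?thesis using True by (simp add: XY_def)
  next
    case False
    hence kl: "k = l" using k by simp
    have K: "xM l s * A i s = (\<Sum>j'<p. Y (j' div n) i (j' mod n) * (A (j' mod n) s * xM (j' div n) s))"
      if s: "s < p" for s
    proof -
      have "(\<Sum>r<n. ((\<Sum>k<l. xM k s * Y k i r) - xM l s * (if i = r then 1 else 0)) * A r s) = 0"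
        using ker s i p_def by auto
      also have "(\<Sum>r<n. ((\<Sum>k<l. xM k s * Y k i r) - xM l s * (if i = r then 1 else 0)) * A r s)
          = (\<Sum>r<n. \<Sum>k<l. Y k i r * (A r s * xM k s)) - (\<Sum>r<n. xM l s * (if i = r then 1 else 0) * A r s)"
        unfolding sum_subtractf[symmetric]
        by (intro sum.cong refl) (simp add: left_diff_distrib right_diff_distrib sum_distrib_left sum_distrib_right mult_ac)
      also have "(\<Sum>r<n. xM l s * (if i = r then 1 else 0) * A r s) = (\<Sum>r<n. if i = r then xM l s * A i s else 0)"
        by (intro sum.cong refl) auto
      also have "\<dots> = xM l s * A i s" using i by simp
      also have "(\<Sum>r<n. \<Sum>k<l. Y k i r * (A r s * xM k s)) = (\<Sum>k<l. \<Sum>r<n. Y k i r * (A r s * xM k s))"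
        by (rule sum.swap)
      also have "\<dots> = (\<Sum>j'<p. Y (j' div n) i (j' mod n) * (A (j' mod n) s * xM (j' div n) s))"
        unfolding p_def by (subst reidx) (intro sum.cong refl, simp)
      finally show ?thesis by simp
    qed
    have "(\<Sum>s<l*n. A i s * Bi $$ (s,j) * xM k s) = (\<Sum>s<p. (xM l s * A i s) * Bi $$ (s,j))"
      unfolding p_def kl by (intro sum.cong refl) (simp add: mult_ac)
    also have "\<dots> = (\<Sum>s<p. (\<Sum>j'<p. Y (j' div n) i (j' mod n) * (A (j' mod n) s * xM (j' div n) s)) * Bi $$ (s,j))"
      by (intro sum.cong refl) (simp add: K)
    also have "\<dots> = (\<Sum>s<p. \<Sum>j'<p. Y (j' div n) i (j' mod n) * (A (j' mod n) s * xM (j' div n) s * Bi $$ (s,j)))"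
      by (rule sum.cong[OF refl], subst sum_distrib_right, rule sum.cong[OF refl], simp add: mult_ac)
    also have "\<dots> = (\<Sum>j'<p. \<Sum>s<p. Y (j' div n) i (j' mod n) * (A (j' mod n) s * xM (j' div n) s * Bi $$ (s,j)))"
      by (rule sum.swap)
    also have "\<dots> = (\<Sum>j'<p. Y (j' div n) i (j' mod n) * (if j' = j then 1 else 0))"
      using j unfolding p_def[symmetric] by (intro sum.cong refl) (simp add: BBie sum_distrib_left[symmetric])
    also have "\<dots> = (\<Sum>j'<p. if j' = j then Y (j div n) i (j mod n) else 0)"
      by (intro sum.cong refl) auto
    also have "\<dots> = Y (j div n) i (j mod n)" using j p_def by simp
    finally show ?thesis using kl by (simp add: XY_def)
  qed
  show ?thesis unfolding tensor_rank_le_def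
    by (rule exI[of _ "\<lambda>s i. A i s"], rule exI[of _ "\<lambda>s j. Bi $$ (s,j)"], rule exI[of _ "\<lambda>s k. xM k s"])
      (use main in auto)
qed

theorem mainTheorem4:
  fixes m n l p :: nat and Y :: "nat \<Rightarrow> nat \<Rightarrow> nat \<Rightarrow> real"
  assumes "3 \<le> m" and "m \<le> n" and "l = m - 1" and "p = (m - 1) * n"
  shows "tensor_rank n p m (XY n l Y) = p \<longleftrightarrow> Y \<in> setM n l"
proof -
  have mS: "m = Suc l" and pl: "p = l*n" using assms by auto
  obtain r0 where r0: "tensor_rank_le n p m (XY n l Y) r0" using rank_exists by blast
  show ?thesis
  proof
    assume "tensor_rank n p m (XY n l Y) = p"
    moreover have "tensor_rank_le n p m (XY n l Y) (tensor_rank n p m (XY n l Y))"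
      unfolding tensor_rank_def by (rule LeastI[of "tensor_rank_le n p m (XY n l Y)", OF r0])
    ultimately have "tensor_rank_le n (l*n) (Suc l) (XY n l Y) (l*n)" using mS pl by simp
    thus "Y \<in> setM n l" by (rule fwd)
  next
    assume "Y \<in> setM n l"
    hence h: "tensor_rank_le n p m (XY n l Y) p" using bwd mS pl by simp
    have le: "tensor_rank n p m (XY n l Y) \<le> p"
      unfolding tensor_rank_def by (rule Least_le[of "tensor_rank_le n p m (XY n l Y)", OF h])
    have "tensor_rank_le n p m (XY n l Y) (tensor_rank n p m (XY n l Y))"
      unfolding tensor_rank_def by (rule LeastI[of "tensor_rank_le n p m (XY n l Y)", OF h])
    hence "p \<le> tensor_rank n p m (XY n l Y)" using lower_bound mS pl by simp
    with le show "tensor_rank n p m (XY n l Y) = p" by simp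
  qed
qed

end
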